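(* For every well-filtered, coherent topological space $X$, the poset $\mathcal QX$ is a meet-continuous dcpo inf-semilattice which is well-filtered and coherent in its Scott topology. Hence $\mathcal Q\mathbb R_\ell$, $\mathcal Q^2\mathbb R_\ell$, $\ldots$ are all meet-continuous dcpo inf-semilattices which are well-filtered and coherent in their Scott topologies.
   Context: $\mathcal QX$ is the set of non-empty compact saturated subsets of $X$ ordered by reverse inclusion $\supseteq$; $\mathcal Q^{n+1}\mathbb R_\ell=\mathcal Q(\mathcal Q^n\mathbb R_\ell)$ where $\mathcal Q^n\mathbb R_\ell$ carries its Scott topology. The Sorgenfrey line $\mathbb R_\ell$ is $\mathbb R$ with the topology generated by $[a,b[$, $a<b$. A space is well-filtered if whenever a filtered family of compact saturated sets has intersection contained in an open $U$, some member of the family is contained in $U$. A space is coherent if the intersection of any two compact saturated subsets is compact. A dcpo inf-semilattice $P$ is meet-continuous if $x\wedge\sup D=\sup_{d\in D}(x\wedge d)$ for every $x\in P$ and directed $D\subseteq P$. *)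

theory Defs
  imports "HOL-Analysis.Analysis"
begin

text \<open>A subset A of the space X is saturated if it is the intersection of the open
  sets containing it (equivalently an upper set for the specialization order).\<close>
definition saturated_in :: "'a topology \<Rightarrow> 'a set \<Rightarrow> bool" where
  "saturated_in X A \<longleftrightarrow> A \<subseteq> topspace X \<and>
     (\<forall>x\<in>topspace X. (\<forall>U. openin X U \<and> A \<subseteq> U \<longrightarrow> x \<in> U) \<longrightarrow> x \<in> A)"

definition compact_saturated :: "'a topology \<Rightarrow> 'a set \<Rightarrow> bool" where
  "compact_saturated X K \<longleftrightarrow> compactin X K \<and> saturated_in X K"

definition filtered_family :: "'a set set \<Rightarrow> bool" where
  "filtered_family \<K> \<longleftrightarrow> \<K> \<noteq> {} \<and>
     (\<forall>K1\<in>\<K>. \<forall>K2\<in>\<K>. \<exists>K3\<in>\<K>. K3 \<subseteq> K1 \<and> K3 \<subseteq> K2)"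

definition well_filtered :: "'a topology \<Rightarrow> bool" where
  "well_filtered X \<longleftrightarrow>
     (\<forall>\<K> U. filtered_family \<K> \<and> (\<forall>K\<in>\<K>. compact_saturated X K) \<and> openin X U
        \<and> \<Inter>\<K> \<subseteq> U \<longrightarrow> (\<exists>K\<in>\<K>. K \<subseteq> U))"

definition coherent :: "'a topology \<Rightarrow> bool" where
  "coherent X \<longleftrightarrow>
     (\<forall>K1 K2. compact_saturated X K1 \<and> compact_saturated X K2 \<longrightarrow> compactin X (K1 \<inter> K2))"

definition poset_on :: "'a set \<Rightarrow> ('a \<Rightarrow> 'a \<Rightarrow> bool) \<Rightarrow> bool" where
  "poset_on P le \<longleftrightarrow> (\<forall>x\<in>P. le x x) \<and> (\<forall>x\<in>P. \<forall>y\<in>P. le x y \<and> le y x \<longrightarrow> x = y)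
     \<and> (\<forall>x\<in>P. \<forall>y\<in>P. \<forall>z\<in>P. le x y \<and> le y z \<longrightarrow> le x z)"

definition directed_in :: "'a set \<Rightarrow> ('a \<Rightarrow> 'a \<Rightarrow> bool) \<Rightarrow> 'a set \<Rightarrow> bool" where
  "directed_in P le D \<longleftrightarrow> D \<subseteq> P \<and> D \<noteq> {} \<and>
     (\<forall>a\<in>D. \<forall>b\<in>D. \<exists>c\<in>D. le a c \<and> le b c)"

definition is_lub :: "'a set \<Rightarrow> ('a \<Rightarrow> 'a \<Rightarrow> bool) \<Rightarrow> 'a set \<Rightarrow> 'a \<Rightarrow> bool" where
  "is_lub P le A s \<longleftrightarrow> s \<in> P \<and> (\<forall>a\<in>A. le a s) \<and> (\<forall>u\<in>P. (\<forall>a\<in>A. le a u) \<longrightarrow> le s u)"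

definition is_glb :: "'a set \<Rightarrow> ('a \<Rightarrow> 'a \<Rightarrow> bool) \<Rightarrow> 'a set \<Rightarrow> 'a \<Rightarrow> bool" where
  "is_glb P le A m \<longleftrightarrow> m \<in> P \<and> (\<forall>a\<in>A. le m a) \<and> (\<forall>u\<in>P. (\<forall>a\<in>A. le u a) \<longrightarrow> le u m)"

definition psup :: "'a set \<Rightarrow> ('a \<Rightarrow> 'a \<Rightarrow> bool) \<Rightarrow> 'a set \<Rightarrow> 'a" where
  "psup P le A = (THE s. is_lub P le A s)"

definition pinf :: "'a set \<Rightarrow> ('a \<Rightarrow> 'a \<Rightarrow> bool) \<Rightarrow> 'a \<Rightarrow> 'a \<Rightarrow> 'a" where
  "pinf P le x y = (THE m. is_glb P le {x, y} m)"

definition dcpo :: "'a set \<Rightarrow> ('a \<Rightarrow> 'a \<Rightarrow> bool) \<Rightarrow> bool" where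
  "dcpo P le \<longleftrightarrow> poset_on P le \<and> (\<forall>D. directed_in P le D \<longrightarrow> (\<exists>s. is_lub P le D s))"

definition inf_semilattice :: "'a set \<Rightarrow> ('a \<Rightarrow> 'a \<Rightarrow> bool) \<Rightarrow> bool" where
  "inf_semilattice P le \<longleftrightarrow> poset_on P le \<and> (\<forall>x\<in>P. \<forall>y\<in>P. \<exists>m. is_glb P le {x, y} m)"

definition meet_continuous :: "'a set \<Rightarrow> ('a \<Rightarrow> 'a \<Rightarrow> bool) \<Rightarrow> bool" where
  "meet_continuous P le \<longleftrightarrow>
     (\<forall>x\<in>P. \<forall>D. directed_in P le D \<longrightarrow>
        pinf P le x (psup P le D) = psup P le ((\<lambda>d. pinf P le x d) ` D))"

definition upper_in :: "'a set \<Rightarrow> ('a \<Rightarrow> 'a \<Rightarrow> bool) \<Rightarrow> 'a set \<Rightarrow> bool" where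
  "upper_in P le U \<longleftrightarrow> U \<subseteq> P \<and> (\<forall>x\<in>U. \<forall>y\<in>P. le x y \<longrightarrow> y \<in> U)"

definition scott_open :: "'a set \<Rightarrow> ('a \<Rightarrow> 'a \<Rightarrow> bool) \<Rightarrow> 'a set \<Rightarrow> bool" where
  "scott_open P le U \<longleftrightarrow> upper_in P le U \<and>
     (\<forall>D s. directed_in P le D \<and> is_lub P le D s \<and> s \<in> U \<longrightarrow> D \<inter> U \<noteq> {})"

definition scott_topology :: "'a set \<Rightarrow> ('a \<Rightarrow> 'a \<Rightarrow> bool) \<Rightarrow> 'a topology" where
  "scott_topology P le = topology (scott_open P le)"

definition Qset :: "'a topology \<Rightarrow> 'a set set" where
  "Qset X = {K. K \<noteq> {} \<and> compact_saturated X K}"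

definition Qle :: "'a set \<Rightarrow> 'a set \<Rightarrow> bool" where
  "Qle K L \<longleftrightarrow> L \<subseteq> K"

definition Qtop :: "'a topology \<Rightarrow> 'a set topology" where
  "Qtop X = scott_topology (Qset X) Qle"

definition Q_good :: "'a topology \<Rightarrow> bool" where
  "Q_good X \<longleftrightarrow> dcpo (Qset X) Qle \<and> inf_semilattice (Qset X) Qle
     \<and> meet_continuous (Qset X) Qle \<and> well_filtered (Qtop X) \<and> coherent (Qtop X)"

definition sorgenfrey :: "real topology" where
  "sorgenfrey = topology_generated_by {{a..<b} | a b. a < b}"

end

theory Submission
  imports Defs
begin

lemma scott_istopology: "istopology (scott_open P le)"
  unfolding istopology_def
proof (intro conjI allI impI)
  fix S T assume S: "scott_open P le S" and T: "scott_open P le T"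
  show "scott_open P le (S \<inter> T)"
    unfolding scott_open_def upper_in_def
  proof (intro conjI allI impI ballI)
    show "S \<inter> T \<subseteq> P" using S unfolding scott_open_def upper_in_def by auto
  next
    fix x y assume "x \<in> S \<inter> T" "y \<in> P" "le x y"
    then show "y \<in> S \<inter> T" using S T unfolding scott_open_def upper_in_def by auto
  next
    fix D s assume H: "directed_in P le D \<and> is_lub P le D s \<and> s \<in> S \<inter> T"
    then obtain a b where a: "a \<in> D" "a \<in> S" and b: "b \<in> D" "b \<in> T"
      using S T unfolding scott_open_def by blast
    then obtain c where c: "c \<in> D" "le a c" "le b c" using H unfolding directed_in_def by blast
    have "c \<in> P" using c H unfolding directed_in_def by auto
    then have "c \<in> S" "c \<in> T" using S T a b c unfolding scott_open_def upper_in_def by auto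
    then show "D \<inter> (S \<inter> T) \<noteq> {}" using c by auto
  qed
next
  fix K assume K: "\<forall>S\<in>K. scott_open P le S"
  show "scott_open P le (\<Union>K)"
    unfolding scott_open_def upper_in_def
  proof (intro conjI allI impI ballI)
    show "\<Union>K \<subseteq> P" using K unfolding scott_open_def upper_in_def by auto
  next
    fix x y assume "x \<in> \<Union>K" "y \<in> P" "le x y"
    then show "y \<in> \<Union>K" using K unfolding scott_open_def upper_in_def by blast
  next
    fix D s assume H: "directed_in P le D \<and> is_lub P le D s \<and> s \<in> \<Union>K"
    then obtain S where "S \<in> K" "s \<in> S" by auto
    then have "D \<inter> S \<noteq> {}" using K H unfolding scott_open_def by blast
    then show "D \<inter> \<Union>K \<noteq> {}" using \<open>S \<in> K\<close> by auto
  qed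
qed

lemma openin_scott: "openin (scott_topology P le) U \<longleftrightarrow> scott_open P le U"
  unfolding scott_topology_def using scott_istopology topology_inverse' by metis

lemma topspace_scott: "topspace (scott_topology P le) = P"
proof -
  have "scott_open P le P"
    unfolding scott_open_def upper_in_def directed_in_def by auto
  moreover have "\<And>U. scott_open P le U \<Longrightarrow> U \<subseteq> P"
    unfolding scott_open_def upper_in_def by auto
  ultimately show ?thesis unfolding topspace_def openin_scott by blast
qed

lemma openin_Qtop: "openin (Qtop X) U \<longleftrightarrow> scott_open (Qset X) Qle U"
  unfolding Qtop_def openin_scott ..

lemma topspace_Qtop[simp]: "topspace (Qtop X) = Qset X"
  unfolding Qtop_def topspace_scott ..

lemma saturated_Inter:
  assumes "\<S> \<noteq> {}" "\<And>A. A \<in> \<S> \<Longrightarrow> saturated_in X A"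
  shows "saturated_in X (\<Inter>\<S>)"
  unfolding saturated_in_def
proof (intro conjI ballI impI)
  show "\<Inter>\<S> \<subseteq> topspace X" using assms unfolding saturated_in_def by blast
next
  fix x assume x: "x \<in> topspace X" and H: "\<forall>U. openin X U \<and> \<Inter>\<S> \<subseteq> U \<longrightarrow> x \<in> U"
  show "x \<in> \<Inter>\<S>"
  proof
    fix A assume "A \<in> \<S>"
    then have "\<forall>U. openin X U \<and> A \<subseteq> U \<longrightarrow> x \<in> U" using H by blast
    then show "x \<in> A" using assms(2)[OF \<open>A \<in> \<S>\<close>] x unfolding saturated_in_def by blast
  qed
qed

lemma saturated_Union:
  assumes "\<And>A. A \<in> \<S> \<Longrightarrow> saturated_in X A"
  shows "saturated_in X (\<Union>\<S>)"
  unfolding saturated_in_def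
proof (intro conjI ballI impI)
  show "\<Union>\<S> \<subseteq> topspace X" using assms unfolding saturated_in_def by blast
next
  fix x assume x: "x \<in> topspace X" and H: "\<forall>U. openin X U \<and> \<Union>\<S> \<subseteq> U \<longrightarrow> x \<in> U"
  show "x \<in> \<Union>\<S>"
  proof (rule ccontr)
    assume "x \<notin> \<Union>\<S>"
    have "\<exists>U. openin X U \<and> A \<subseteq> U \<and> x \<notin> U" if "A \<in> \<S>" for A
    proof -
      have "x \<notin> A" using \<open>x \<notin> \<Union>\<S>\<close> that by auto
      then show ?thesis using assms[OF that] x unfolding saturated_in_def by meson
    qed
    then have "\<forall>A\<in>\<S>. \<exists>U. openin X U \<and> A \<subseteq> U \<and> x \<notin> U" by blast
    then obtain f where f: "\<forall>A\<in>\<S>. openin X (f A) \<and> A \<subseteq> f A \<and> x \<notin> f A" by metis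
    have "openin X (\<Union>(f ` \<S>))" using f by auto
    moreover have "\<Union>\<S> \<subseteq> \<Union>(f ` \<S>)" using f by auto
    ultimately have "x \<in> \<Union>(f ` \<S>)" using H by (elim allE impE) (rule conjI)
    then obtain A where "A \<in> \<S>" "x \<in> f A" by blast
    then show False using f by blast
  qed
qed

lemma saturated_Int: "saturated_in X A \<Longrightarrow> saturated_in X B \<Longrightarrow> saturated_in X (A \<inter> B)"
  using saturated_Inter[of "{A,B}" X] by auto

lemma saturated_Un: "saturated_in X A \<Longrightarrow> saturated_in X B \<Longrightarrow> saturated_in X (A \<union> B)"
  using saturated_Union[of "{A,B}" X] by auto

lemma saturated_empty[simp]: "saturated_in X {}"
  unfolding saturated_in_def by (metis empty_subsetI openin_empty)

lemma wf_Inter: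
  assumes wf: "well_filtered X" and F: "filtered_family \<D>"
    and C: "\<And>d. d \<in> \<D> \<Longrightarrow> compact_saturated X d"
  shows "compact_saturated X (\<Inter>\<D>)"
  unfolding compact_saturated_def
proof
  have ne: "\<D> \<noteq> {}" using F unfolding filtered_family_def by auto
  show "saturated_in X (\<Inter>\<D>)"
    using saturated_Inter[OF ne] C unfolding compact_saturated_def by auto
  show "compactin X (\<Inter>\<D>)"
    unfolding compactin_def
  proof (intro conjI allI impI)
    show "\<Inter>\<D> \<subseteq> topspace X" using ne C unfolding compact_saturated_def compactin_def by blast
  next
    fix \<U> assume U: "(\<forall>V\<in>\<U>. openin X V) \<and> \<Inter>\<D> \<subseteq> \<Union>\<U>"
    have oU: "openin X (\<Union>\<U>)" using U by auto
    have "\<exists>d\<in>\<D>. d \<subseteq> \<Union>\<U>"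
      using wf[unfolded well_filtered_def, rule_format, of \<D> "\<Union>\<U>"] F C oU U by blast
    then obtain d where d: "d \<in> \<D>" "d \<subseteq> \<Union>\<U>" by blast
    have cd: "compactin X d" using C[OF d(1)] unfolding compact_saturated_def by blast
    have "\<exists>\<F>. finite \<F> \<and> \<F> \<subseteq> \<U> \<and> d \<subseteq> \<Union>\<F>"
      using cd[unfolded compactin_def] U d(2) by blast
    then obtain \<F> where F1: "finite \<F>" "\<F> \<subseteq> \<U>" "d \<subseteq> \<Union>\<F>" by blast
    have "\<Inter>\<D> \<subseteq> d" using d(1) by (rule Inter_lower)
    then have "\<Inter>\<D> \<subseteq> \<Union>\<F>" using F1(3) by (rule order_trans)
    then show "\<exists>\<F>. finite \<F> \<and> \<F> \<subseteq> \<U> \<and> \<Inter>\<D> \<subseteq> \<Union>\<F>" using F1(1,2) by blast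
  qed
qed

lemma wf_Inter_ne:
  assumes wf: "well_filtered X" and F: "filtered_family \<D>"
    and C: "\<And>d. d \<in> \<D> \<Longrightarrow> compact_saturated X d" and N: "\<And>d. d \<in> \<D> \<Longrightarrow> d \<noteq> {}"
  shows "\<Inter>\<D> \<noteq> {}"
proof
  assume "\<Inter>\<D> = {}"
  then obtain d where "d \<in> \<D>" "d \<subseteq> {}"
    using wf F C unfolding well_filtered_def by (metis openin_empty order_refl)
  then show False using N by auto
qed

lemma directed_Q_iff:
  "directed_in (Qset X) Qle D \<longleftrightarrow> D \<subseteq> Qset X \<and> filtered_family D"
  unfolding directed_in_def filtered_family_def Qle_def by auto

lemma Q_lub:
  assumes wf: "well_filtered X" and D: "directed_in (Qset X) Qle D"
  shows "\<Inter>D \<in> Qset X" "is_lub (Qset X) Qle D (\<Inter>D)"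
proof -
  have F: "filtered_family D" and sub: "D \<subseteq> Qset X" using D directed_Q_iff by auto
  have "compact_saturated X (\<Inter>D)" using wf_Inter[OF wf F] sub unfolding Qset_def by auto
  moreover have "\<Inter>D \<noteq> {}" using wf_Inter_ne[OF wf F] sub unfolding Qset_def by auto
  ultimately show "\<Inter>D \<in> Qset X" unfolding Qset_def by auto
  then show "is_lub (Qset X) Qle D (\<Inter>D)" unfolding is_lub_def Qle_def by auto
qed

lemma Q_lub_unique:
  assumes "is_lub (Qset X) Qle D s" "is_lub (Qset X) Qle D t" shows "s = t"
  using assms unfolding is_lub_def Qle_def by blast

lemma Q_lub_eq:
  assumes wf: "well_filtered X" and D: "directed_in (Qset X) Qle D" and "is_lub (Qset X) Qle D s"
  shows "s = \<Inter>D"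
  using Q_lub_unique[OF assms(3) Q_lub(2)[OF wf D]] .

lemma Q_psup:
  assumes wf: "well_filtered X" and D: "directed_in (Qset X) Qle D"
  shows "psup (Qset X) Qle D = \<Inter>D"
  unfolding psup_def
proof (rule the_equality)
  show "is_lub (Qset X) Qle D (\<Inter>D)" using Q_lub(2)[OF wf D] .
  fix s assume "is_lub (Qset X) Qle D s" then show "s = \<Inter>D" using Q_lub_eq[OF wf D] by blast
qed

lemma Q_glb:
  assumes "x \<in> Qset X" "y \<in> Qset X"
  shows "is_glb (Qset X) Qle {x, y} (x \<union> y)"
proof -
  have "x \<union> y \<in> Qset X" using assms unfolding Qset_def compact_saturated_def
    by (auto intro: compactin_Un saturated_Un)
  then show ?thesis unfolding is_glb_def Qle_def by auto
qed

lemma Q_pinf: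
  assumes "x \<in> Qset X" "y \<in> Qset X"
  shows "pinf (Qset X) Qle x y = x \<union> y"
  unfolding pinf_def
proof (rule the_equality)
  show "is_glb (Qset X) Qle {x, y} (x \<union> y)" using Q_glb[OF assms] .
  fix m assume "is_glb (Qset X) Qle {x, y} m"
  then show "m = x \<union> y" using Q_glb[OF assms] unfolding is_glb_def Qle_def
    by (metis equalityI insert_iff)
qed

lemma Q_poset: "poset_on (Qset X) Qle"
  unfolding poset_on_def Qle_def by auto

lemma Q_dcpo: "well_filtered X \<Longrightarrow> dcpo (Qset X) Qle"
  unfolding dcpo_def using Q_poset Q_lub by blast

lemma Q_inf_semilattice: "inf_semilattice (Qset X) Qle"
  unfolding inf_semilattice_def using Q_poset Q_glb by blast

lemma Q_meet_continuous:
  assumes wf: "well_filtered X" shows "meet_continuous (Qset X) Qle"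
  unfolding meet_continuous_def
proof (intro ballI allI impI)
  fix x D assume x: "x \<in> Qset X" and D: "directed_in (Qset X) Qle D"
  have sub: "D \<subseteq> Qset X" using D directed_Q_iff by auto
  have s: "psup (Qset X) Qle D = \<Inter>D" using Q_psup[OF wf D] .
  have "\<Inter>D \<in> Qset X" using Q_lub[OF wf D] by simp
  then have l: "pinf (Qset X) Qle x (psup (Qset X) Qle D) = x \<union> \<Inter>D" using s Q_pinf x by simp
  have img: "(\<lambda>d. pinf (Qset X) Qle x d) ` D = (\<lambda>d. x \<union> d) ` D"
    using Q_pinf[OF x] sub by auto
  have D2: "directed_in (Qset X) Qle ((\<lambda>d. x \<union> d) ` D)"
    unfolding directed_in_def
  proof (intro conjI ballI)
    show "(\<lambda>d. x \<union> d) ` D \<subseteq> Qset X" using Q_glb[OF x] sub unfolding is_glb_def by auto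
    show "(\<lambda>d. x \<union> d) ` D \<noteq> {}" using D unfolding directed_in_def by auto
  next
    fix a b assume "a \<in> (\<lambda>d. x \<union> d) ` D" "b \<in> (\<lambda>d. x \<union> d) ` D"
    then obtain a' b' where "a' \<in> D" "b' \<in> D" "a = x \<union> a'" "b = x \<union> b'" by auto
    then obtain c where "c \<in> D" "c \<subseteq> a'" "c \<subseteq> b'" using D unfolding directed_in_def Qle_def by blast
    then have "x \<union> c \<in> (\<lambda>d. x \<union> d) ` D" "Qle a (x \<union> c)" "Qle b (x \<union> c)"
      unfolding Qle_def using \<open>a = x \<union> a'\<close> \<open>b = x \<union> b'\<close> by auto
    then show "\<exists>c\<in>(\<lambda>d. x \<union> d) ` D. Qle a c \<and> Qle b c" by blast
  qed
  have "psup (Qset X) Qle ((\<lambda>d. x \<union> d) ` D) = \<Inter>((\<lambda>d. x \<union> d) ` D)" using Q_psup[OF wf D2] .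
  also have "\<dots> = x \<union> \<Inter>D" by auto
  finally have e: "psup (Qset X) Qle ((\<lambda>d. x \<union> d) ` D) = x \<union> \<Inter>D" .
  show "pinf (Qset X) Qle x (psup (Qset X) Qle D) = psup (Qset X) Qle ((\<lambda>d. pinf (Qset X) Qle x d) ` D)"
    by (simp only: l img e)
qed

definition Box :: "'a topology \<Rightarrow> 'a set \<Rightarrow> 'a set set" where
  "Box X V = {L \<in> Qset X. L \<subseteq> V}"

lemma Qtop_open_down:
  assumes "openin (Qtop X) U" "L \<in> U" "L' \<in> Qset X" "L' \<subseteq> L"
  shows "L' \<in> U"
  using assms unfolding openin_Qtop scott_open_def upper_in_def Qle_def by blast

lemma Qtop_open_sub: "openin (Qtop X) U \<Longrightarrow> U \<subseteq> Qset X"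
  unfolding openin_Qtop scott_open_def upper_in_def by blast

lemma Qtop_open_lub:
  assumes U: "openin (Qtop X) U" and wf: "well_filtered X" and D: "directed_in (Qset X) Qle D"
    and i: "\<Inter>D \<in> U"
  shows "\<exists>d\<in>D. d \<in> U"
proof -
  have "is_lub (Qset X) Qle D (\<Inter>D)" using Q_lub(2)[OF wf D] .
  then have "D \<inter> U \<noteq> {}" using U D i unfolding openin_Qtop scott_open_def by blast
  then show ?thesis by blast
qed

lemma Qtop_openI:
  assumes wf: "well_filtered X" and sub: "U \<subseteq> Qset X"
    and down: "\<And>L L'. L \<in> U \<Longrightarrow> L' \<in> Qset X \<Longrightarrow> L' \<subseteq> L \<Longrightarrow> L' \<in> U"
    and lub: "\<And>D. D \<subseteq> Qset X \<Longrightarrow> filtered_family D \<Longrightarrow> \<Inter>D \<in> U \<Longrightarrow> \<exists>d\<in>D. d \<in> U"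
  shows "openin (Qtop X) U"
  unfolding openin_Qtop scott_open_def upper_in_def
proof (intro conjI ballI allI impI)
  show "U \<subseteq> Qset X" by fact
next
  fix x y assume "x \<in> U" "y \<in> Qset X" "Qle x y"
  then show "y \<in> U" using down unfolding Qle_def by blast
next
  fix D s assume H: "directed_in (Qset X) Qle D \<and> is_lub (Qset X) Qle D s \<and> s \<in> U"
  then have "s = \<Inter>D" using Q_lub_eq[OF wf] by blast
  then obtain d where "d \<in> D" "d \<in> U" using lub H directed_Q_iff by metis
  then show "D \<inter> U \<noteq> {}" by blast
qed

lemma Box_open:
  assumes wf: "well_filtered X" and V: "openin X V"
  shows "openin (Qtop X) (Box X V)"
proof (rule Qtop_openI[OF wf])
  show "Box X V \<subseteq> Qset X" unfolding Box_def by blast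
next
  fix L L' assume "L \<in> Box X V" "L' \<in> Qset X" "L' \<subseteq> L"
  then show "L' \<in> Box X V" unfolding Box_def by blast
next
  fix D assume D: "D \<subseteq> Qset X" "filtered_family D" "\<Inter>D \<in> Box X V"
  have "\<forall>K\<in>D. compact_saturated X K" using D(1) unfolding Qset_def by blast
  moreover have "\<Inter>D \<subseteq> V" using D(3) unfolding Box_def by blast
  ultimately have "\<exists>K\<in>D. K \<subseteq> V"
    using wf[unfolded well_filtered_def, rule_format, of D V] D(2) V by blast
  then show "\<exists>d\<in>D. d \<in> Box X V" using D(1) unfolding Box_def by blast
qed

lemma Qtop_sat_down:
  assumes "saturated_in (Qtop X) K" "L \<in> K" "L' \<in> Qset X" "L' \<subseteq> L"
  shows "L' \<in> K"
proof -
  have "\<forall>U. openin (Qtop X) U \<and> K \<subseteq> U \<longrightarrow> L' \<in> U"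
    using assms(2-4) Qtop_open_down by blast
  then show ?thesis using assms(1,3) unfolding saturated_in_def by simp
qed

lemma finite_directed_bound:
  assumes "finite F" "F \<subseteq> \<U>" "\<U> \<noteq> {}" "\<forall>a\<in>\<U>. \<forall>b\<in>\<U>. \<exists>c\<in>\<U>. a \<subseteq> c \<and> b \<subseteq> c"
  shows "\<exists>U\<in>\<U>. \<Union>F \<subseteq> U"
  using assms(1,2)
proof (induction F rule: finite_induct)
  case empty show ?case using assms(3) by (metis all_not_in_conv Union_empty empty_subsetI)
next
  case (insert x F)
  have "F \<subseteq> \<U>" using insert.prems by simp
  from insert.IH[OF this] obtain U where U: "U \<in> \<U>" "\<Union>F \<subseteq> U" ..
  have "x \<in> \<U>" using insert.prems by simp
  then obtain c where c: "c \<in> \<U>" "x \<subseteq> c" "U \<subseteq> c" using assms(4) U(1) by blast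
  have "\<Union>(insert x F) \<subseteq> c" using U(2) c(2,3) by auto
  then show ?case using c(1) by blast
qed

lemma compact_dir:
  assumes K: "compactin T S" and ne: "\<U> \<noteq> {}" and op: "\<forall>U\<in>\<U>. openin T U"
    and dir: "\<forall>a\<in>\<U>. \<forall>b\<in>\<U>. \<exists>c\<in>\<U>. a \<subseteq> c \<and> b \<subseteq> c" and cov: "S \<subseteq> \<Union>\<U>"
  shows "\<exists>U\<in>\<U>. S \<subseteq> U"
proof -
  have "\<exists>F. finite F \<and> F \<subseteq> \<U> \<and> S \<subseteq> \<Union>F" using K[unfolded compactin_def] op cov by meson
  then obtain F where F: "finite F" "F \<subseteq> \<U>" "S \<subseteq> \<Union>F" by metis
  obtain U where "U \<in> \<U>" "\<Union>F \<subseteq> U" using finite_directed_bound[OF F(1,2) ne dir] by metis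
  then show ?thesis using F(3) by (meson order_trans)
qed

lemma dir_compact:
  assumes sub: "S \<subseteq> topspace T"
    and H: "\<And>\<U>. \<U> \<noteq> {} \<Longrightarrow> \<forall>U\<in>\<U>. openin T U \<Longrightarrow> \<forall>a\<in>\<U>. \<forall>b\<in>\<U>. \<exists>c\<in>\<U>. a \<subseteq> c \<and> b \<subseteq> c
           \<Longrightarrow> S \<subseteq> \<Union>\<U> \<Longrightarrow> \<exists>U\<in>\<U>. S \<subseteq> U"
  shows "compactin T S"
  unfolding compactin_def
proof (intro conjI allI impI)
  show "S \<subseteq> topspace T" by fact
next
  fix \<V> assume V: "(\<forall>V\<in>\<V>. openin T V) \<and> S \<subseteq> \<Union>\<V>"
  define \<U> where "\<U> = Union ` {F. finite F \<and> F \<subseteq> \<V>}"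
  have ne: "\<U> \<noteq> {}" unfolding \<U>_def by blast
  have op: "\<forall>U\<in>\<U>. openin T U" unfolding \<U>_def using V by blast
  have dir: "\<forall>a\<in>\<U>. \<forall>b\<in>\<U>. \<exists>c\<in>\<U>. a \<subseteq> c \<and> b \<subseteq> c"
  proof (intro ballI)
    fix a b assume "a \<in> \<U>" "b \<in> \<U>"
    then obtain F G where FG: "finite F" "F \<subseteq> \<V>" "a = \<Union>F" "finite G" "G \<subseteq> \<V>" "b = \<Union>G"
      unfolding \<U>_def by blast
    then have "F \<union> G \<in> {F. finite F \<and> F \<subseteq> \<V>}" by auto
    then have "\<Union>(F \<union> G) \<in> \<U>" unfolding \<U>_def by (rule imageI)
    moreover have "a \<subseteq> \<Union>(F \<union> G)" "b \<subseteq> \<Union>(F \<union> G)" using FG(3,6) by auto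
    ultimately show "\<exists>c\<in>\<U>. a \<subseteq> c \<and> b \<subseteq> c" by metis
  qed
  have cov: "S \<subseteq> \<Union>\<U>"
  proof
    fix x assume "x \<in> S"
    then obtain V where "V \<in> \<V>" "x \<in> V" using V by blast
    then have "{V} \<in> {F. finite F \<and> F \<subseteq> \<V>}" by auto
    then have "\<Union>{V} \<in> \<U>" unfolding \<U>_def by (rule imageI)
    then show "x \<in> \<Union>\<U>" using \<open>x \<in> V\<close> by auto
  qed
  obtain U where "U \<in> \<U>" "S \<subseteq> U" using H[OF ne op dir cov] by metis
  then obtain F where "finite F" "F \<subseteq> \<V>" "U = \<Union>F" unfolding \<U>_def by auto
  then show "\<exists>\<F>. finite \<F> \<and> \<F> \<subseteq> \<V> \<and> S \<subseteq> \<Union>\<F>" using \<open>S \<subseteq> U\<close> by metis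
qed

lemma Union_compact:
  assumes wf: "well_filtered X" and S: "compactin (Qtop X) \<S>"
  shows "compactin X (\<Union>\<S>)"
proof (rule dir_compact)
  have "\<S> \<subseteq> Qset X" using S compactin_subset_topspace by fastforce
  then show sub: "\<Union>\<S> \<subseteq> topspace X" unfolding Qset_def compact_saturated_def compactin_def by auto
next
  fix \<U> assume ne: "\<U> \<noteq> {}" and op: "\<forall>U\<in>\<U>. openin X U"
    and dir: "\<forall>a\<in>\<U>. \<forall>b\<in>\<U>. \<exists>c\<in>\<U>. a \<subseteq> c \<and> b \<subseteq> c" and cov: "\<Union>\<S> \<subseteq> \<Union>\<U>"
  have SQ: "\<S> \<subseteq> Qset X" using S compactin_subset_topspace by fastforce
  define \<B> where "\<B> = Box X ` \<U>"
  have ne': "\<B> \<noteq> {}" using ne unfolding \<B>_def by blast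
  have op': "\<forall>B\<in>\<B>. openin (Qtop X) B" unfolding \<B>_def using Box_open[OF wf] op by blast
  have dir': "\<forall>a\<in>\<B>. \<forall>b\<in>\<B>. \<exists>c\<in>\<B>. a \<subseteq> c \<and> b \<subseteq> c"
  proof (intro ballI)
    fix a b assume "a \<in> \<B>" "b \<in> \<B>"
    then obtain U1 U2 where "U1 \<in> \<U>" "U2 \<in> \<U>" "a = Box X U1" "b = Box X U2" unfolding \<B>_def by blast
    moreover obtain c where "c \<in> \<U>" "U1 \<subseteq> c" "U2 \<subseteq> c" using dir calculation(1,2) by blast
    ultimately have "Box X c \<in> \<B>" "a \<subseteq> Box X c" "b \<subseteq> Box X c" unfolding \<B>_def Box_def by auto
    then show "\<exists>c\<in>\<B>. a \<subseteq> c \<and> b \<subseteq> c" by blast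
  qed
  have cov': "\<S> \<subseteq> \<Union>\<B>"
  proof
    fix L assume L: "L \<in> \<S>"
    then have LQ: "L \<in> Qset X" using SQ by blast
    then have cL: "compactin X L" unfolding Qset_def compact_saturated_def by blast
    have "L \<subseteq> \<Union>\<S>" using L by (rule Union_upper)
    then have "L \<subseteq> \<Union>\<U>" using cov by (rule order_trans)
    then obtain U where "U \<in> \<U>" "L \<subseteq> U" using compact_dir[OF cL ne op dir] by metis
    then have "L \<in> Box X U" "Box X U \<in> \<B>" using LQ unfolding Box_def \<B>_def by auto
    then show "L \<in> \<Union>\<B>" by (rule UnionI[rotated])
  qed
  obtain B where "B \<in> \<B>" "\<S> \<subseteq> B" using compact_dir[OF S ne' op' dir' cov'] by metis
  then obtain U where "U \<in> \<U>" "\<S> \<subseteq> Box X U" unfolding \<B>_def by auto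
  then have "\<Union>\<S> \<subseteq> U" unfolding Box_def by auto
  then show "\<exists>U\<in>\<U>. \<Union>\<S> \<subseteq> U" using \<open>U \<in> \<U>\<close> by metis
qed

lemma Q_well_filtered:
  assumes wf: "well_filtered X"
  shows "well_filtered (Qtop X)"
  unfolding well_filtered_def
proof (intro allI impI)
  fix \<KK> U0
  assume H: "filtered_family \<KK> \<and> (\<forall>K\<in>\<KK>. compact_saturated (Qtop X) K) \<and> openin (Qtop X) U0 \<and> \<Inter>\<KK> \<subseteq> U0"
  have fam: "filtered_family \<KK>" and cs: "\<And>K. K \<in> \<KK> \<Longrightarrow> compact_saturated (Qtop X) K"
    and U0: "openin (Qtop X) U0" and sub0: "\<Inter>\<KK> \<subseteq> U0" using H by auto
  have cpt: "\<And>K. K \<in> \<KK> \<Longrightarrow> compactin (Qtop X) K" using cs unfolding compact_saturated_def by blast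
  have sat: "\<And>K. K \<in> \<KK> \<Longrightarrow> saturated_in (Qtop X) K" using cs unfolding compact_saturated_def by blast
  have KQ: "\<And>K. K \<in> \<KK> \<Longrightarrow> K \<subseteq> Qset X" using cpt compactin_subset_topspace by fastforce
  have KKne: "\<KK> \<noteq> {}" using fam unfolding filtered_family_def by blast
  show "\<exists>K\<in>\<KK>. K \<subseteq> U0"
  proof (rule ccontr)
    assume "\<not> (\<exists>K\<in>\<KK>. K \<subseteq> U0)"
    then have nU0: "\<And>K. K \<in> \<KK> \<Longrightarrow> \<not> K \<subseteq> U0" by blast
    define A where "A = {Ob. openin (Qtop X) Ob \<and> U0 \<subseteq> Ob \<and> (\<forall>K\<in>\<KK>. \<not> K \<subseteq> Ob)}"
    have U0A: "U0 \<in> A" unfolding A_def using U0 nU0 by blast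
    have "\<exists>M\<in>A. \<forall>Y\<in>A. M \<subseteq> Y \<longrightarrow> Y = M"
    proof (rule subset_Zorn)
      fix C assume ch: "subset.chain A C"
      show "\<exists>U\<in>A. \<forall>Y\<in>C. Y \<subseteq> U"
      proof (cases "C = {}")
        case True then show ?thesis using U0A by blast
      next
        case False
        have CA: "C \<subseteq> A" and tot: "\<forall>a\<in>C. \<forall>b\<in>C. a \<subseteq> b \<or> b \<subseteq> a"
          using ch unfolding subset_chain_def by auto
        have opC: "\<forall>Ob\<in>C. openin (Qtop X) Ob" using CA unfolding A_def by blast
        have "openin (Qtop X) (\<Union>C)" using opC by auto
        moreover have "U0 \<subseteq> \<Union>C"
        proof -
          obtain Ob where "Ob \<in> C" using False by blast
          then have "U0 \<subseteq> Ob" using CA unfolding A_def by blast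
          then show ?thesis using \<open>Ob \<in> C\<close> by (meson Union_upper order_trans)
        qed
        moreover have "\<forall>K\<in>\<KK>. \<not> K \<subseteq> \<Union>C"
        proof (intro ballI notI)
          fix K assume K: "K \<in> \<KK>" "K \<subseteq> \<Union>C"
          have dir: "\<forall>a\<in>C. \<forall>b\<in>C. \<exists>c\<in>C. a \<subseteq> c \<and> b \<subseteq> c"
          proof (intro ballI)
            fix a b assume "a \<in> C" "b \<in> C"
            then show "\<exists>c\<in>C. a \<subseteq> c \<and> b \<subseteq> c" using tot by (metis order_refl)
          qed
          obtain Ob where "Ob \<in> C" "K \<subseteq> Ob" using compact_dir[OF cpt[OF K(1)] False opC dir K(2)] by metis
          then show False using CA K(1) unfolding A_def by blast
        qed
        ultimately have "\<Union>C \<in> A" unfolding A_def by blast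
        moreover have "\<forall>Y\<in>C. Y \<subseteq> \<Union>C" by (simp add: Union_upper)
        ultimately show ?thesis by metis
      qed
    qed
    then obtain M where MA: "M \<in> A" and Mmax: "\<And>Y. Y \<in> A \<Longrightarrow> M \<subseteq> Y \<Longrightarrow> Y = M" by metis
    have Mo: "openin (Qtop X) M" and U0M: "U0 \<subseteq> M" and nM: "\<And>K. K \<in> \<KK> \<Longrightarrow> \<not> K \<subseteq> M"
      using MA unfolding A_def by auto
    define w where "w K = \<Union>(K - M)" for K
    have KMne: "K - M \<noteq> {}" if "K \<in> \<KK>" for K using nM[OF that] by blast
    have wQ: "w K \<in> Qset X" if K: "K \<in> \<KK>" for K
    proof -
      have "closedin (Qtop X) (Qset X - M)" using Mo by (metis closedin_diff closedin_topspace topspace_Qtop)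
      then have "compactin (Qtop X) (K \<inter> (Qset X - M))" using compact_Int_closedin[OF cpt[OF K]] by blast
      moreover have "K \<inter> (Qset X - M) = K - M" using KQ[OF K] by auto
      ultimately have "compactin (Qtop X) (K - M)" by simp
      then have c: "compactin X (w K)" unfolding w_def by (rule Union_compact[OF wf])
      have s: "saturated_in X (w K)" unfolding w_def
        by (rule saturated_Union) (use KQ[OF K] in \<open>auto simp: Qset_def compact_saturated_def\<close>)
      obtain L where L: "L \<in> K - M" using KMne[OF K] by blast
      then have "L \<noteq> {}" using KQ[OF K] unfolding Qset_def by auto
      moreover have "L \<subseteq> w K" unfolding w_def using L by (rule Union_upper)
      ultimately have "w K \<noteq> {}" by blast
      then show ?thesis using c s unfolding Qset_def compact_saturated_def by blast
    qed
    have wM: "w K \<notin> M" if K: "K \<in> \<KK>" for K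
    proof
      assume "w K \<in> M"
      obtain L where L: "L \<in> K - M" using KMne[OF K] by blast
      have "L \<subseteq> w K" unfolding w_def using L by (rule Union_upper)
      moreover have "L \<in> Qset X" using L KQ[OF K] by blast
      ultimately have "L \<in> M" using Qtop_open_down[OF Mo \<open>w K \<in> M\<close>] by blast
      then show False using L by blast
    qed
    have wmono: "w K' \<subseteq> w K" if "K' \<subseteq> K" for K K' unfolding w_def using that by auto
    define W where "W = w ` \<KK>"
    have WD: "directed_in (Qset X) Qle W"
      unfolding directed_Q_iff filtered_family_def
    proof (intro conjI ballI)
      show "W \<subseteq> Qset X" unfolding W_def using wQ by blast
      show "W \<noteq> {}" unfolding W_def using KKne by blast
    next
      fix a b assume "a \<in> W" "b \<in> W"
      then obtain Ka Kb where Ka: "Ka \<in> \<KK>" "a = w Ka" and Kb: "Kb \<in> \<KK>" "b = w Kb" unfolding W_def by blast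
      obtain Kc where Kc: "Kc \<in> \<KK>" "Kc \<subseteq> Ka" "Kc \<subseteq> Kb" using fam Ka(1) Kb(1) unfolding filtered_family_def by metis
      have "w Kc \<in> W" unfolding W_def using Kc(1) by (rule imageI)
      moreover have "w Kc \<subseteq> a" "w Kc \<subseteq> b" using wmono Kc Ka(2) Kb(2) by auto
      ultimately show "\<exists>c\<in>W. c \<subseteq> a \<and> c \<subseteq> b" by metis
    qed
    define u where "u = \<Inter>W"
    have uQ: "u \<in> Qset X" unfolding u_def using Q_lub(1)[OF wf WD] .
    have uM: "u \<notin> M"
    proof
      assume "u \<in> M"
      then obtain d where "d \<in> W" "d \<in> M" using Qtop_open_lub[OF Mo wf WD] unfolding u_def by metis
      then show False using wM unfolding W_def by blast
    qed
    have uw: "u \<subseteq> w K" if "K \<in> \<KK>" for K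
    proof -
      have "w K \<in> W" unfolding W_def using that by (rule imageI)
      then show ?thesis unfolding u_def by (rule Inter_lower)
    qed
    have G3: "\<exists>K\<in>\<KK>. w K \<subseteq> V" if V: "openin X V" and LV: "L \<in> Box X V" "L \<notin> M" for V L
    proof -
      have o: "openin (Qtop X) (M \<union> Box X V)" using Mo Box_open[OF wf V] by (rule openin_Un)
      have ne: "M \<union> Box X V \<noteq> M" using LV by blast
      have "M \<union> Box X V \<notin> A"
      proof
        assume "M \<union> Box X V \<in> A"
        then have "M \<union> Box X V = M" using Mmax by blast
        then show False using ne by blast
      qed
      then obtain K where K: "K \<in> \<KK>" "K \<subseteq> M \<union> Box X V" using o U0M unfolding A_def by blast
      have "w K \<subseteq> V"
      proof
        fix y assume "y \<in> w K"
        then obtain L' where "L' \<in> K" "L' \<notin> M" "y \<in> L'" unfolding w_def by blast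
        then have "L' \<in> Box X V" using K(2) by blast
        then show "y \<in> V" using \<open>y \<in> L'\<close> unfolding Box_def by blast
      qed
      then show ?thesis using K(1) by blast
    qed
    have uK: "u \<in> K0" if K0: "K0 \<in> \<KK>" for K0
    proof (rule ccontr)
      assume nu: "u \<notin> K0"
      obtain L where L: "L \<in> K0" "L \<notin> M" using KMne[OF K0] by blast
      have LQ: "L \<in> Qset X" using L(1) KQ[OF K0] by blast
      have "\<not> u \<subseteq> L"
      proof
        assume "u \<subseteq> L"
        then have "u \<in> K0" using Qtop_sat_down[OF sat[OF K0] L(1) uQ] by blast
        then show False using nu by blast
      qed
      then obtain x where x: "x \<in> u" "x \<notin> L" by blast
      have xt: "x \<in> topspace X" using x(1) uQ unfolding Qset_def compact_saturated_def compactin_def by blast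
      have Ls: "saturated_in X L" using LQ unfolding Qset_def compact_saturated_def by blast
      have "\<exists>V. openin X V \<and> L \<subseteq> V \<and> x \<notin> V"
        using Ls xt x(2) unfolding saturated_in_def by meson
      then obtain V where V: "openin X V" "L \<subseteq> V" "x \<notin> V" by metis
      have "L \<in> Box X V" unfolding Box_def using LQ V(2) by blast
      then obtain K where K: "K \<in> \<KK>" "w K \<subseteq> V" using G3[OF V(1) _ L(2)] by metis
      have "x \<in> w K" using uw[OF K(1)] x(1) by blast
      then show False using K(2) V(3) by blast
    qed
    have "u \<in> \<Inter>\<KK>" using uK by blast
    then have "u \<in> M" using sub0 U0M by blast
    then show False using uM by blast
  qed
qed

lemma Int_Q:
  assumes coh: "coherent X" and "L1 \<in> Qset X" "L2 \<in> Qset X" "L1 \<inter> L2 \<noteq> {}"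
  shows "L1 \<inter> L2 \<in> Qset X"
proof -
  have c1: "compact_saturated X L1" "compact_saturated X L2" using assms(2,3) unfolding Qset_def by auto
  then have "compactin X (L1 \<inter> L2)" using coh unfolding coherent_def by blast
  moreover have "saturated_in X (L1 \<inter> L2)" using c1 saturated_Int unfolding compact_saturated_def by blast
  ultimately show ?thesis using assms(4) unfolding Qset_def compact_saturated_def by blast
qed

lemma cs_Int:
  assumes coh: "coherent X" and "compact_saturated X L1" "compact_saturated X L2"
  shows "compact_saturated X (L1 \<inter> L2)"
  using assms saturated_Int unfolding coherent_def compact_saturated_def by blast

lemma filt_img:
  assumes "filtered_family D" shows "filtered_family ((\<lambda>d. d \<inter> L) ` D)"
  unfolding filtered_family_def
proof (intro conjI ballI)
  show "(\<lambda>d. d \<inter> L) ` D \<noteq> {}" using assms unfolding filtered_family_def by blast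
next
  fix a b assume "a \<in> (\<lambda>d. d \<inter> L) ` D" "b \<in> (\<lambda>d. d \<inter> L) ` D"
  then obtain da db where "da \<in> D" "db \<in> D" "a = da \<inter> L" "b = db \<inter> L" by blast
  moreover obtain dc where "dc \<in> D" "dc \<subseteq> da" "dc \<subseteq> db" using assms calculation(1,2) unfolding filtered_family_def by metis
  ultimately have "dc \<inter> L \<in> (\<lambda>d. d \<inter> L) ` D" "dc \<inter> L \<subseteq> a" "dc \<inter> L \<subseteq> b" by auto
  then show "\<exists>c\<in>(\<lambda>d. d \<inter> L) ` D. c \<subseteq> a \<and> c \<subseteq> b" by metis
qed

lemma Inter_img: "D \<noteq> {} \<Longrightarrow> \<Inter>((\<lambda>d. d \<inter> L) ` D) = \<Inter>D \<inter> L"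
  by auto

definition VV :: "'a topology \<Rightarrow> 'a set set \<Rightarrow> 'a set \<Rightarrow> 'a set set" where
  "VV X U L2 = {L1 \<in> Qset X. L1 \<inter> L2 = {} \<or> L1 \<inter> L2 \<in> U}"

lemma VV_open:
  assumes wf: "well_filtered X" and coh: "coherent X" and U: "openin (Qtop X) U" and L2: "L2 \<in> Qset X"
  shows "openin (Qtop X) (VV X U L2)"
proof (rule Qtop_openI[OF wf])
  show "VV X U L2 \<subseteq> Qset X" unfolding VV_def by blast
next
  fix L L' assume L: "L \<in> VV X U L2" and L': "L' \<in> Qset X" "L' \<subseteq> L"
  show "L' \<in> VV X U L2"
  proof (cases "L' \<inter> L2 = {}")
    case True then show ?thesis using L' unfolding VV_def by blast
  next
    case False
    then have "L \<inter> L2 \<noteq> {}" using L'(2) by blast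
    then have "L \<inter> L2 \<in> U" using L unfolding VV_def by blast
    moreover have "L' \<inter> L2 \<in> Qset X" using Int_Q[OF coh L'(1) L2 False] .
    moreover have "L' \<inter> L2 \<subseteq> L \<inter> L2" using L'(2) by blast
    ultimately have "L' \<inter> L2 \<in> U" using Qtop_open_down[OF U] by blast
    then show ?thesis using L' unfolding VV_def by blast
  qed
next
  fix D assume D: "D \<subseteq> Qset X" "filtered_family D" "\<Inter>D \<in> VV X U L2"
  have Dne: "D \<noteq> {}" using D(2) unfolding filtered_family_def by blast
  define E where "E = (\<lambda>d. d \<inter> L2) ` D"
  have fE: "filtered_family E" unfolding E_def using D(2) by (rule filt_img)
  have iE: "\<Inter>E = \<Inter>D \<inter> L2" unfolding E_def using Dne by (rule Inter_img)
  have L2cs: "compact_saturated X L2" using L2 unfolding Qset_def by blast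
  show "\<exists>d\<in>D. d \<in> VV X U L2"
  proof (cases "\<Inter>D \<inter> L2 = {}")
    case True
    have "\<forall>K\<in>E. compact_saturated X K"
    proof
      fix K assume "K \<in> E"
      then obtain d where "d \<in> D" "K = d \<inter> L2" unfolding E_def by blast
      moreover have "compact_saturated X d" using \<open>d \<in> D\<close> D(1) unfolding Qset_def by blast
      ultimately show "compact_saturated X K" using cs_Int[OF coh _ L2cs] by blast
    qed
    moreover have "\<Inter>E \<subseteq> {}" using iE True by simp
    ultimately have "\<exists>K\<in>E. K \<subseteq> {}" using wf[unfolded well_filtered_def, rule_format, of E "{}"] fE by simp
    then obtain d where "d \<in> D" "d \<inter> L2 = {}" unfolding E_def by blast
    then show ?thesis using D(1) unfolding VV_def by blast
  next
    case False
    then have inU: "\<Inter>D \<inter> L2 \<in> U" using D(3) unfolding VV_def by blast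
    have EQ: "E \<subseteq> Qset X"
    proof
      fix K assume "K \<in> E"
      then obtain d where d: "d \<in> D" "K = d \<inter> L2" unfolding E_def by blast
      have "\<Inter>D \<subseteq> d" using d(1) by (rule Inter_lower)
      then have "d \<inter> L2 \<noteq> {}" using False by blast
      then show "K \<in> Qset X" using Int_Q[OF coh _ L2] d D(1) by blast
    qed
    have dE: "directed_in (Qset X) Qle E" using directed_Q_iff EQ fE by blast
    have "\<Inter>E \<in> U" using iE inU by simp
    then obtain K where "K \<in> E" "K \<in> U" using Qtop_open_lub[OF U wf dE] by metis
    then obtain d where "d \<in> D" "d \<inter> L2 \<in> U" unfolding E_def by blast
    then show ?thesis using D(1) unfolding VV_def by blast
  qed
qed

lemma VV_swap: "L1 \<in> Qset X \<Longrightarrow> L2 \<in> Qset X \<Longrightarrow> L1 \<in> VV X U L2 \<longleftrightarrow> L2 \<in> VV X U L1"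
  unfolding VV_def by (simp add: Int_commute)

lemma VV_monoU: "U \<subseteq> U' \<Longrightarrow> VV X U L \<subseteq> VV X U' L"
  unfolding VV_def by blast

lemma VV_anti:
  assumes coh: "coherent X" and U: "openin (Qtop X) U" and L2: "L2' \<in> Qset X" "L2' \<subseteq> L2"
  shows "VV X U L2 \<subseteq> VV X U L2'"
proof
  fix L1 assume L1: "L1 \<in> VV X U L2"
  show "L1 \<in> VV X U L2'"
  proof (cases "L1 \<inter> L2' = {}")
    case True then show ?thesis using L1 unfolding VV_def by blast
  next
    case False
    then have "L1 \<inter> L2 \<noteq> {}" using L2(2) by blast
    then have "L1 \<inter> L2 \<in> U" using L1 unfolding VV_def by blast
    moreover have L1Q: "L1 \<in> Qset X" using L1 unfolding VV_def by blast
    moreover have "L1 \<inter> L2' \<in> Qset X" using Int_Q[OF coh L1Q L2(1) False] .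
    moreover have "L1 \<inter> L2' \<subseteq> L1 \<inter> L2" using L2(2) by blast
    ultimately have "L1 \<inter> L2' \<in> U" using Qtop_open_down[OF U] by blast
    then show ?thesis using L1Q unfolding VV_def by blast
  qed
qed

lemma Q_coherent:
  assumes wf: "well_filtered X" and coh: "coherent X"
  shows "coherent (Qtop X)"
  unfolding coherent_def
proof (intro allI impI)
  fix K1 K2 assume H: "compact_saturated (Qtop X) K1 \<and> compact_saturated (Qtop X) K2"
  have c1: "compactin (Qtop X) K1" and s1: "saturated_in (Qtop X) K1"
    and c2: "compactin (Qtop X) K2" and s2: "saturated_in (Qtop X) K2"
    using H unfolding compact_saturated_def by auto
  have K1Q: "K1 \<subseteq> Qset X" using c1 compactin_subset_topspace by fastforce
  have K2Q: "K2 \<subseteq> Qset X" using c2 compactin_subset_topspace by fastforce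
  show "compactin (Qtop X) (K1 \<inter> K2)"
  proof (rule dir_compact)
    show "K1 \<inter> K2 \<subseteq> topspace (Qtop X)" using K1Q by auto
  next
    fix \<U> assume ne: "\<U> \<noteq> {}" and op: "\<forall>U\<in>\<U>. openin (Qtop X) U"
      and dir: "\<forall>a\<in>\<U>. \<forall>b\<in>\<U>. \<exists>c\<in>\<U>. a \<subseteq> c \<and> b \<subseteq> c" and cov: "K1 \<inter> K2 \<subseteq> \<Union>\<U>"
    obtain U00 where U00: "U00 \<in> \<U>" using ne by blast
    have stepA: "\<exists>U\<in>\<U>. K1 \<subseteq> VV X U L2" if L2: "L2 \<in> K2" for L2
    proof -
      have L2Q: "L2 \<in> Qset X" using L2 K2Q by blast
      define \<V> where "\<V> = (\<lambda>U. VV X U L2) ` \<U>"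
      have ne': "\<V> \<noteq> {}" unfolding \<V>_def using ne by blast
      have op': "\<forall>V\<in>\<V>. openin (Qtop X) V" unfolding \<V>_def using VV_open[OF wf coh _ L2Q] op by blast
      have dir': "\<forall>a\<in>\<V>. \<forall>b\<in>\<V>. \<exists>c\<in>\<V>. a \<subseteq> c \<and> b \<subseteq> c"
      proof (intro ballI)
        fix a b assume "a \<in> \<V>" "b \<in> \<V>"
        then obtain Ua Ub where "Ua \<in> \<U>" "Ub \<in> \<U>" "a = VV X Ua L2" "b = VV X Ub L2" unfolding \<V>_def by blast
        moreover obtain Uc where "Uc \<in> \<U>" "Ua \<subseteq> Uc" "Ub \<subseteq> Uc" using dir calculation(1,2) by metis
        moreover have "VV X Ua L2 \<subseteq> VV X Uc L2" "VV X Ub L2 \<subseteq> VV X Uc L2"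
          using VV_monoU[OF calculation(6)] VV_monoU[OF calculation(7)] by auto
        ultimately have "VV X Uc L2 \<in> \<V>" "a \<subseteq> VV X Uc L2" "b \<subseteq> VV X Uc L2"
          unfolding \<V>_def by auto
        then show "\<exists>c\<in>\<V>. a \<subseteq> c \<and> b \<subseteq> c" by metis
      qed
      have cov': "K1 \<subseteq> \<Union>\<V>"
      proof
        fix L1 assume L1: "L1 \<in> K1"
        have L1Q: "L1 \<in> Qset X" using L1 K1Q by blast
        show "L1 \<in> \<Union>\<V>"
        proof (cases "L1 \<inter> L2 = {}")
          case True
          then have "L1 \<in> VV X U00 L2" using L1Q unfolding VV_def by blast
          moreover have "VV X U00 L2 \<in> \<V>" unfolding \<V>_def using U00 by (rule imageI)
          ultimately show ?thesis by (rule UnionI[rotated])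
        next
          case False
          have IQ: "L1 \<inter> L2 \<in> Qset X" using Int_Q[OF coh L1Q L2Q False] .
          have "L1 \<inter> L2 \<in> K1" using Qtop_sat_down[OF s1 L1 IQ] by blast
          moreover have "L1 \<inter> L2 \<in> K2" using Qtop_sat_down[OF s2 L2 IQ] by blast
          ultimately have "L1 \<inter> L2 \<in> \<Union>\<U>" using cov by blast
          then obtain U where U: "U \<in> \<U>" "L1 \<inter> L2 \<in> U" by blast
          then have "L1 \<in> VV X U L2" using L1Q unfolding VV_def by blast
          moreover have "VV X U L2 \<in> \<V>" unfolding \<V>_def using U(1) by (rule imageI)
          ultimately show ?thesis by (rule UnionI[rotated])
        qed
      qed
      obtain V where "V \<in> \<V>" "K1 \<subseteq> V" using compact_dir[OF c1 ne' op' dir' cov'] by metis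
      then show ?thesis unfolding \<V>_def by blast
    qed
    define WW where "WW U = {L2 \<in> Qset X. K1 \<subseteq> VV X U L2}" for U
    have WWopen: "openin (Qtop X) (WW U)" if U: "U \<in> \<U>" for U
    proof (rule Qtop_openI[OF wf])
      have Uo: "openin (Qtop X) U" using op U by blast
      show "WW U \<subseteq> Qset X" unfolding WW_def by blast
    next
      fix L L' assume L: "L \<in> WW U" and L': "L' \<in> Qset X" "L' \<subseteq> L"
      have Uo: "openin (Qtop X) U" using op U by blast
      have "VV X U L \<subseteq> VV X U L'" using VV_anti[OF coh Uo L'] .
      then show "L' \<in> WW U" using L L'(1) unfolding WW_def by blast
    next
      fix D assume D: "D \<subseteq> Qset X" "filtered_family D" "\<Inter>D \<in> WW U"
      have Uo: "openin (Qtop X) U" using op U by blast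
      have Dne: "D \<noteq> {}" using D(2) unfolding filtered_family_def by blast
      have dD: "directed_in (Qset X) Qle D" using directed_Q_iff D(1,2) by blast
      have iQ: "\<Inter>D \<in> Qset X" using Q_lub(1)[OF wf dD] .
      define \<V> where "\<V> = (\<lambda>d. VV X U d) ` D"
      have ne': "\<V> \<noteq> {}" unfolding \<V>_def using Dne by blast
      have op': "\<forall>V\<in>\<V>. openin (Qtop X) V" unfolding \<V>_def using VV_open[OF wf coh Uo] D(1) by blast
      have dir': "\<forall>a\<in>\<V>. \<forall>b\<in>\<V>. \<exists>c\<in>\<V>. a \<subseteq> c \<and> b \<subseteq> c"
      proof (intro ballI)
        fix a b assume "a \<in> \<V>" "b \<in> \<V>"
        then obtain da db where "da \<in> D" "db \<in> D" "a = VV X U da" "b = VV X U db" unfolding \<V>_def by blast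
        moreover obtain dc where "dc \<in> D" "dc \<subseteq> da" "dc \<subseteq> db"
          using D(2) calculation(1,2) unfolding filtered_family_def by metis
        moreover have "dc \<in> Qset X" using calculation(5) D(1) by blast
        ultimately have "VV X U dc \<in> \<V>" "a \<subseteq> VV X U dc" "b \<subseteq> VV X U dc"
          unfolding \<V>_def using VV_anti[OF coh Uo] by auto
        then show "\<exists>c\<in>\<V>. a \<subseteq> c \<and> b \<subseteq> c" by metis
      qed
      have cov': "K1 \<subseteq> \<Union>\<V>"
      proof
        fix L1 assume L1: "L1 \<in> K1"
        have L1Q: "L1 \<in> Qset X" using L1 K1Q by blast
        have "L1 \<in> VV X U (\<Inter>D)" using D(3) L1 unfolding WW_def by blast
        then have "\<Inter>D \<in> VV X U L1" using VV_swap[OF L1Q iQ] by blast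
        then obtain d where d: "d \<in> D" "d \<in> VV X U L1"
          using Qtop_open_lub[OF VV_open[OF wf coh Uo L1Q] wf dD] by metis
        have "L1 \<in> VV X U d" using VV_swap[OF L1Q] d D(1) by blast
        moreover have "VV X U d \<in> \<V>" unfolding \<V>_def using d(1) by (rule imageI)
        ultimately show "L1 \<in> \<Union>\<V>" by (rule UnionI[rotated])
      qed
      obtain V where "V \<in> \<V>" "K1 \<subseteq> V" using compact_dir[OF c1 ne' op' dir' cov'] by metis
      then obtain d where "d \<in> D" "K1 \<subseteq> VV X U d" unfolding \<V>_def by blast
      then have "d \<in> WW U" using D(1) unfolding WW_def by blast
      then show "\<exists>d\<in>D. d \<in> WW U" using \<open>d \<in> D\<close> by blast
    qed
    have WWmono: "WW U \<subseteq> WW U'" if "U \<subseteq> U'" for U U'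
    proof
      fix L assume "L \<in> WW U"
      then have L: "L \<in> Qset X" "K1 \<subseteq> VV X U L" unfolding WW_def by auto
      have "VV X U L \<subseteq> VV X U' L" using that by (rule VV_monoU)
      then show "L \<in> WW U'" using L unfolding WW_def by auto
    qed
    define \<W> where "\<W> = WW ` \<U>"
    have ne'': "\<W> \<noteq> {}" unfolding \<W>_def using ne by blast
    have op'': "\<forall>V\<in>\<W>. openin (Qtop X) V" unfolding \<W>_def using WWopen by blast
    have dir'': "\<forall>a\<in>\<W>. \<forall>b\<in>\<W>. \<exists>c\<in>\<W>. a \<subseteq> c \<and> b \<subseteq> c"
    proof (intro ballI)
      fix a b assume "a \<in> \<W>" "b \<in> \<W>"
      then obtain Ua Ub where "Ua \<in> \<U>" "Ub \<in> \<U>" "a = WW Ua" "b = WW Ub" unfolding \<W>_def by blast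
      moreover obtain Uc where "Uc \<in> \<U>" "Ua \<subseteq> Uc" "Ub \<subseteq> Uc" using dir calculation(1,2) by metis
      moreover have "WW Ua \<subseteq> WW Uc" "WW Ub \<subseteq> WW Uc"
        using WWmono calculation(6,7) by auto
      ultimately have "WW Uc \<in> \<W>" "a \<subseteq> WW Uc" "b \<subseteq> WW Uc" unfolding \<W>_def by auto
      then show "\<exists>c\<in>\<W>. a \<subseteq> c \<and> b \<subseteq> c" by metis
    qed
    have cov'': "K2 \<subseteq> \<Union>\<W>"
    proof
      fix L2 assume L2: "L2 \<in> K2"
      obtain U where U: "U \<in> \<U>" "K1 \<subseteq> VV X U L2" using stepA[OF L2] by metis
      have "L2 \<in> WW U" unfolding WW_def using U(2) L2 K2Q by blast
      moreover have "WW U \<in> \<W>" unfolding \<W>_def using U(1) by (rule imageI)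
      ultimately show "L2 \<in> \<Union>\<W>" by (rule UnionI[rotated])
    qed
    obtain V where "V \<in> \<W>" "K2 \<subseteq> V" using compact_dir[OF c2 ne'' op'' dir'' cov''] by metis
    then obtain U where U: "U \<in> \<U>" "K2 \<subseteq> WW U" unfolding \<W>_def by blast
    have "K1 \<inter> K2 \<subseteq> U"
    proof
      fix L assume L: "L \<in> K1 \<inter> K2"
      then have "L \<in> VV X U L" using U(2) unfolding WW_def by blast
      moreover have "L \<noteq> {}" using L K1Q unfolding Qset_def by blast
      ultimately show "L \<in> U" unfolding VV_def by simp
    qed
    then show "\<exists>U\<in>\<U>. K1 \<inter> K2 \<subseteq> U" using U(1) by blast
  qed
qed

lemma Q_good_main:
  assumes wf: "well_filtered X" and coh: "coherent X"
  shows "Q_good X"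
  unfolding Q_good_def
  using Q_dcpo[OF wf] Q_inf_semilattice Q_meet_continuous[OF wf] Q_well_filtered[OF wf] Q_coherent[OF wf coh]
  by blast

lemma Q_good_wc: "Q_good X \<Longrightarrow> well_filtered (Qtop X) \<and> coherent (Qtop X)"
  unfolding Q_good_def by blast

lemma filt_bound:
  assumes fam: "filtered_family \<KK>" and G: "finite G" "G \<subseteq> \<KK>"
  shows "\<exists>K\<in>\<KK>. \<forall>G'\<in>G. K \<subseteq> G'"
  using G
proof (induction G rule: finite_induct)
  case empty then show ?case using fam unfolding filtered_family_def by auto
next
  case (insert x G)
  have "G \<subseteq> \<KK>" using insert.prems by simp
  from insert.IH[OF this] obtain K where K: "K \<in> \<KK>" "\<forall>G'\<in>G. K \<subseteq> G'" ..
  have "x \<in> \<KK>" using insert.prems by simp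
  then obtain c where c: "c \<in> \<KK>" "c \<subseteq> x" "c \<subseteq> K" using fam K(1) unfolding filtered_family_def by metis
  have "\<forall>G'\<in>insert x G. c \<subseteq> G'" using c K(2) by auto
  then show ?case using c(1) by metis
qed

lemma Hausdorff_wf:
  assumes H: "Hausdorff_space X"
  shows "well_filtered X"
  unfolding well_filtered_def
proof (intro allI impI)
  fix \<KK> U
  assume A: "filtered_family \<KK> \<and> (\<forall>K\<in>\<KK>. compact_saturated X K) \<and> openin X U \<and> \<Inter>\<KK> \<subseteq> U"
  have fam: "filtered_family \<KK>" and cs: "\<And>K. K \<in> \<KK> \<Longrightarrow> compactin X K"
    and U: "openin X U" and sub: "\<Inter>\<KK> \<subseteq> U"
    using A unfolding compact_saturated_def by auto
  have cl: "\<And>K. K \<in> \<KK> \<Longrightarrow> closedin X K" using compactin_imp_closedin[OF H] cs by blast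
  obtain K0 where K0: "K0 \<in> \<KK>" using fam unfolding filtered_family_def by blast
  define C where "C = K0 \<inter> (topspace X - U)"
  have cC: "compactin X C" unfolding C_def using compact_Int_closedin[OF cs[OF K0]] U by blast
  define \<O> where "\<O> = (\<lambda>K. topspace X - K) ` \<KK>"
  have opO: "\<forall>V\<in>\<O>. openin X V" unfolding \<O>_def using cl by blast
  have covO: "C \<subseteq> \<Union>\<O>"
  proof
    fix x assume x: "x \<in> C"
    then have "x \<notin> \<Inter>\<KK>" using sub unfolding C_def by blast
    then obtain K where K: "K \<in> \<KK>" "x \<notin> K" by blast
    have "x \<in> topspace X - K" using x K(2) unfolding C_def by blast
    moreover have "topspace X - K \<in> \<O>" unfolding \<O>_def using K(1) by (rule imageI)
    ultimately show "x \<in> \<Union>\<O>" by (rule UnionI[rotated])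
  qed
  have "\<exists>F. finite F \<and> F \<subseteq> \<O> \<and> C \<subseteq> \<Union>F" using cC[unfolded compactin_def] opO covO by meson
  then obtain F where F: "finite F" "F \<subseteq> \<O>" "C \<subseteq> \<Union>F" by metis
  obtain G where G: "G \<subseteq> \<KK>" "finite G" "F = (\<lambda>K. topspace X - K) ` G"
    using finite_subset_image[OF F(1) F(2)[unfolded \<O>_def]] by metis
  obtain K' where K': "K' \<in> \<KK>" "\<forall>G'\<in>insert K0 G. K' \<subseteq> G'"
    using filt_bound[OF fam, of "insert K0 G"] G K0 by auto
  have "K' \<subseteq> U"
  proof
    fix y assume y: "y \<in> K'"
    show "y \<in> U"
    proof (rule ccontr)
      assume "y \<notin> U"
      moreover have "y \<in> K0" using y K'(2) by blast
      moreover have "y \<in> topspace X" using y cs[OF K'(1)] compactin_subset_topspace by blast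
      ultimately have "y \<in> C" unfolding C_def by blast
      then have "y \<in> \<Union>F" using F(3) by blast
      then obtain K where "K \<in> G" "y \<in> topspace X - K" unfolding G(3) by blast
      moreover have "K' \<subseteq> K" using K'(2) calculation(1) by blast
      ultimately show False using y by blast
    qed
  qed
  then show "\<exists>K\<in>\<KK>. K \<subseteq> U" using K'(1) by blast
qed

lemma Hausdorff_coherent:
  assumes H: "Hausdorff_space X"
  shows "coherent X"
  unfolding coherent_def
proof (intro allI impI)
  fix K1 K2 assume "compact_saturated X K1 \<and> compact_saturated X K2"
  then have c: "compactin X K1" "compactin X K2" unfolding compact_saturated_def by auto
  have "closedin X (K1 \<inter> K2)" using compactin_imp_closedin[OF H] c by blast
  then show "compactin X (K1 \<inter> K2)" using closed_compactin[OF c(1)] by blast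
qed

lemma sorgenfrey_open: "a < b \<Longrightarrow> openin sorgenfrey {a..<b}"
  unfolding sorgenfrey_def by (rule topology_generated_by_Basis) blast

lemma sorgenfrey_topspace: "topspace sorgenfrey = UNIV"
proof -
  have "x \<in> \<Union>{{a..<b} | a b. a < (b::real)}" for x :: real
  proof -
    have "{x..<x+1} \<in> {{a..<b} | a b. a < (b::real)}" by force
    moreover have "x \<in> {x..<x+1}" by simp
    ultimately show ?thesis by (rule UnionI)
  qed
  then show ?thesis unfolding sorgenfrey_def topology_generated_by_topspace by blast
qed

lemma sorgenfrey_Hausdorff: "Hausdorff_space sorgenfrey"
  unfolding Hausdorff_space_def
proof (intro allI impI)
  fix x y :: real assume "x \<in> topspace sorgenfrey \<and> y \<in> topspace sorgenfrey \<and> x \<noteq> y"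
  then have "x < y \<or> y < x" by auto
  then show "\<exists>U V. openin sorgenfrey U \<and> openin sorgenfrey V \<and> x \<in> U \<and> y \<in> V \<and> disjnt U V"
  proof
    assume xy: "x < y"
    have "openin sorgenfrey {x..<y}" "openin sorgenfrey {y..<y+1}" using xy by (auto intro: sorgenfrey_open)
    moreover have "disjnt {x..<y} {y..<y+1}" unfolding disjnt_def by auto
    ultimately show ?thesis using xy by (metis atLeastLessThan_iff less_add_one order_refl)
  next
    assume xy: "y < x"
    have "openin sorgenfrey {x..<x+1}" "openin sorgenfrey {y..<x}" using xy by (auto intro: sorgenfrey_open)
    moreover have "disjnt {x..<x+1} {y..<x}" unfolding disjnt_def by auto
    ultimately show ?thesis using xy by (metis atLeastLessThan_iff less_add_one order_refl)
  qed
qed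

theorem proposition4p24:
  shows "(\<forall>X :: 'a topology. well_filtered X \<and> coherent X \<longrightarrow> Q_good X)
    \<and> Q_good sorgenfrey
    \<and> Q_good (Qtop sorgenfrey)
    \<and> Q_good (Qtop (Qtop sorgenfrey))
    \<and> Q_good (Qtop (Qtop (Qtop sorgenfrey)))"
proof -
  have g0: "Q_good sorgenfrey"
    using Q_good_main Hausdorff_wf[OF sorgenfrey_Hausdorff] Hausdorff_coherent[OF sorgenfrey_Hausdorff] by blast
  have g1: "Q_good (Qtop sorgenfrey)" using Q_good_main Q_good_wc[OF g0] by blast
  have g2: "Q_good (Qtop (Qtop sorgenfrey))" using Q_good_main Q_good_wc[OF g1] by blast
  have g3: "Q_good (Qtop (Qtop (Qtop sorgenfrey)))" using Q_good_main Q_good_wc[OF g2] by blast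
  show ?thesis using Q_good_main g0 g1 g2 g3 by blast
qed

end
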